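(* Let $\omega_0>0$, $\lambda\in\mathbb R$, $\omega\ge0$ measurable, $g\in\mathfrak h$, and let $G=G^*$ be a $2\times2$ matrix with zero diagonal entries in the $\sigma_z$-eigenbasis. Let $\mu$ be a Borel probability measure on $\mathfrak h$ that is even, i.e. $\mu(-A)=\mu(A)$ for all Borel $A\subset\mathfrak h$. For $f\in\mathfrak h$ let $U_t(f)$ solve $i\partial_tU_t(f)=[\tfrac12\omega_0\sigma_z+\sqrt2\lambda\,\mathrm{Re}\langle e^{-it\omega}f,g\rangle\,G]U_t(f)$, $U_0(f)=1$, and for a $2\times2$ matrix $X$ set $\Phi_t(X)=\int_{\mathfrak h}d\mu(f)\,U_t(f)XU_t(f)^*$. Then for all $t$: if $X$ is diagonal, $\Phi_t(X)$ is diagonal; if $X$ has zero diagonal entries, so does $\Phi_t(X)$. Consequently the diagonal and off-diagonal parts of the spin density matrix $\gamma(t)=\Phi_t(\gamma_0)$ evolve independently.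
   Context: $\mathfrak h=L^2(\mathbb R^3,d^3k)$ with inner product $\langle f,g\rangle=\int\overline fg$; $e^{-it\omega}$ acts by multiplication; "diagonal" refers to the eigenbasis $\sigma_z|1\rangle=|1\rangle$, $\sigma_z|2\rangle=-|2\rangle$. *)

theory Defs
  imports "HOL-Probability.Probability"
begin

text \<open>The one-particle space h = L^2(R^3, d^3k), represented by square-integrable
  functions real^3 => complex (inner products do not see a.e. differences).\<close>

definition L2 :: "(real^3 \<Rightarrow> complex) set" where
  "L2 = {f. f \<in> borel_measurable lborel \<and> integrable lborel (\<lambda>k. (cmod (f k))\<^sup>2)}"

definition l2inner :: "(real^3 \<Rightarrow> complex) \<Rightarrow> (real^3 \<Rightarrow> complex) \<Rightarrow> complex" where
  "l2inner f g = (\<integral>k. cnj (f k) * g k \<partial>lborel)"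

text \<open>Borel sigma-algebra of the separable Hilbert space h: generated by the
  continuous linear functionals f |-> <h,f>.\<close>
definition L2_borel_sets :: "(real^3 \<Rightarrow> complex) set set" where
  "L2_borel_sets = sigma_sets L2
     (\<Union>h\<in>L2. {(\<lambda>f. l2inner h f) -` B \<inter> L2 | B. B \<in> sets (borel :: complex measure)})"

definition evol :: "(real^3 \<Rightarrow> real) \<Rightarrow> real \<Rightarrow> (real^3 \<Rightarrow> complex) \<Rightarrow> (real^3 \<Rightarrow> complex)" where
  "evol \<omega> t f = (\<lambda>k. exp (- (\<i> * complex_of_real (t * \<omega> k))) * f k)"

text \<open>2x2 matrices, indices 1,2 = sigma_z-eigenbasis |1>, |2>.\<close>
definition sigma_z :: "complex^2^2" where
  "sigma_z = (\<chi> i j. if i = j then (if i = 1 then 1 else -1) else 0)"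

definition adj :: "complex^2^2 \<Rightarrow> complex^2^2" where
  "adj A = (\<chi> i j. cnj (A $ j $ i))"

definition is_diag :: "complex^2^2 \<Rightarrow> bool" where
  "is_diag X \<longleftrightarrow> X $ 1 $ 2 = 0 \<and> X $ 2 $ 1 = 0"

definition zero_diag :: "complex^2^2 \<Rightarrow> bool" where
  "zero_diag X \<longleftrightarrow> X $ 1 $ 1 = 0 \<and> X $ 2 $ 2 = 0"

definition Ham :: "real \<Rightarrow> real \<Rightarrow> (real^3 \<Rightarrow> real) \<Rightarrow> (real^3 \<Rightarrow> complex) \<Rightarrow> complex^2^2
    \<Rightarrow> real \<Rightarrow> (real^3 \<Rightarrow> complex) \<Rightarrow> complex^2^2" where
  "Ham \<omega>0 lam \<omega> g G t f =
     (\<omega>0 / 2) *\<^sub>R sigma_z + (sqrt 2 * lam * Re (l2inner (evol \<omega> t f) g)) *\<^sub>R G"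

definition Phi :: "(real^3 \<Rightarrow> complex) measure \<Rightarrow> (real \<Rightarrow> (real^3 \<Rightarrow> complex) \<Rightarrow> complex^2^2)
    \<Rightarrow> real \<Rightarrow> complex^2^2 \<Rightarrow> complex^2^2" where
  "Phi \<mu> U t X = (\<integral>f. U t f ** X ** adj (U t f) \<partial>\<mu>)"

end

theory Submission imports Defs begin

lemma mm2: "((A::complex^2^2) ** B) $ i $ j = A$i$1*B$1$j + A$i$2*B$2$j"
  by (simp add: matrix_matrix_mult_def sum_2)

lemma meq2: "(A::complex^2^2) = B \<longleftrightarrow> A$1$1 = B$1$1 \<and> A$1$2 = B$1$2 \<and> A$2$1 = B$2$1 \<and> A$2$2 = B$2$2"
  by (auto simp: vec_eq_iff forall_2)

lemma bil: "bilinear ((**) :: complex^2^2 \<Rightarrow> complex^2^2 \<Rightarrow> complex^2^2)"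
  unfolding bilinear_def linear_iff
  by (auto simp: meq2 mm2 algebra_simps vector_scaleR_component)

lemma bbil: "bounded_bilinear ((**) :: complex^2^2 \<Rightarrow> complex^2^2 \<Rightarrow> complex^2^2)"
  using bil bilinear_conv_bounded_bilinear by blast

lemma adj_lin: "bounded_linear adj"
  unfolding linear_conv_bounded_linear[symmetric] linear_iff
  by (auto simp: adj_def vec_eq_iff vector_scaleR_component)

lemma adj_mult: "adj ((A::complex^2^2) ** B) = adj B ** adj A"
  by (simp add: meq2 mm2 adj_def algebra_simps)

lemma adj_adj: "adj (adj A) = A" by (simp add: adj_def vec_eq_iff)
lemma adj_mat: "adj (mat c) = mat (cnj c)" by (simp add: adj_def mat_def vec_eq_iff)

lemma sz: "sigma_z $ 1 $ 1 = 1" "sigma_z $ 1 $ 2 = 0" "sigma_z $ 2 $ 1 = 0" "sigma_z $ 2 $ 2 = -1"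
  by (simp_all add: sigma_z_def)
lemma mat2: "(mat c :: complex^2^2) $ 1 $ 1 = c" "(mat c :: complex^2^2) $ 1 $ 2 = 0" "(mat c :: complex^2^2) $ 2 $ 1 = 0" "(mat c :: complex^2^2) $ 2 $ 2 = c"
  by (simp_all add: mat_def)
lemma adj2: "adj A $ i $ j = cnj (A $ j $ i)" by (simp add: adj_def)

lemma szsz: "sigma_z ** sigma_z = mat 1" by (simp add: meq2 mm2 sz mat2)
lemma adj_sz: "adj sigma_z = sigma_z" by (simp add: meq2 adj2 sz)
lemma sz_off: "G $ 1 $ 1 = 0 \<Longrightarrow> G $ 2 $ 2 = 0 \<Longrightarrow> sigma_z ** G ** sigma_z = - G"
  by (simp add: meq2 mm2 sz)
lemma sz_diag: "is_diag X \<Longrightarrow> sigma_z ** X ** sigma_z = X"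
  by (simp add: meq2 mm2 sz is_diag_def)
lemma sz_zd: "zero_diag X \<Longrightarrow> sigma_z ** X ** sigma_z = - X"
  by (simp add: meq2 mm2 sz zero_diag_def)
lemma sz_ent: "(sigma_z ** A ** sigma_z) $ 1 $ 2 = - A $ 1 $ 2" "(sigma_z ** A ** sigma_z) $ 2 $ 1 = - A $ 2 $ 1"
  "(sigma_z ** A ** sigma_z) $ 1 $ 1 = A $ 1 $ 1" "(sigma_z ** A ** sigma_z) $ 2 $ 2 = A $ 2 $ 2"
  by (simp_all add: mm2 sz)
lemma adj_add: "adj (A + B) = adj A + adj B" by (simp add: adj_def vec_eq_iff)
lemma adj_scaleR: "adj (r *\<^sub>R A) = r *\<^sub>R adj A" by (simp add: adj_def vec_eq_iff vector_scaleR_component)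
lemma mult_scaleR_l: "(r *\<^sub>R (A::complex^2^2)) ** (B::complex^2^2) = r *\<^sub>R (A ** B)"
  using bounded_bilinear.scaleR_left[OF bbil] by metis
lemma mult_scaleR_r: "(A::complex^2^2) ** (r *\<^sub>R (B::complex^2^2)) = r *\<^sub>R (A ** B)"
  using bounded_bilinear.scaleR_right[OF bbil] by metis
lemma mat_mult_c: "mat c ** (A::complex^2^2) = A ** mat c"
  by (simp add: meq2 mm2 mat2 algebra_simps)
lemma mneg_l: "(- (A::complex^2^2)) ** (B::complex^2^2) = - (A ** B)"
  using bounded_bilinear.minus_left[OF bbil] by metis
lemma mneg_r: "(A::complex^2^2) ** (- (B::complex^2^2)) = - (A ** B)"
  using bounded_bilinear.minus_right[OF bbil] by metis
lemma mcancel: "M ** mat (- c) + M ** mat c = (0::complex^2^2)"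
  by (simp add: meq2 mm2 mat2)
lemma szszr: "(X::complex^2^2) ** sigma_z ** sigma_z = X"
  by (metis matrix_mul_assoc szsz matrix_mul_rid)
lemma sz_matc: "sigma_z ** mat c = mat c ** sigma_z"
  by (simp add: mat_mult_c)

lemma sz_lin: "bounded_linear (\<lambda>M. sigma_z ** (M::complex^2^2) ** sigma_z)"
  using bounded_linear_compose[OF bounded_bilinear.bounded_linear_left[OF bbil]
      bounded_bilinear.bounded_linear_right[OF bbil]] by blast

lemma ent_lin: "bounded_linear (\<lambda>M::complex^2^2. M $ i $ j)"
  using bounded_linear_compose[OF bounded_linear_vec_nth bounded_linear_vec_nth] by blast

lemma ode_const:
  fixes A B :: "real \<Rightarrow> complex^2^2" and H :: "real \<Rightarrow> complex^2^2"
  assumes herm: "\<And>t. adj (H t) = H t"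
    and dA: "\<And>t. (A has_vector_derivative (mat (- \<i>) ** (H t ** A t))) (at t)"
    and dB: "\<And>t. (B has_vector_derivative (mat (- \<i>) ** (H t ** B t))) (at t)"
  shows "adj (A t) ** B t = adj (A 0) ** B 0"
proof -
  have d: "((\<lambda>s. adj (A s) ** B s) has_vector_derivative 0) (at s within UNIV)" for s
  proof -
    have a: "((\<lambda>s. adj (A s)) has_vector_derivative adj (mat (- \<i>) ** (H s ** A s))) (at s)"
      using bounded_linear.has_vector_derivative[OF adj_lin dA] .
    have "((\<lambda>s. adj (A s) ** B s) has_vector_derivative
       (adj (A s) ** (mat (- \<i>) ** (H s ** B s)) + adj (mat (- \<i>) ** (H s ** A s)) ** B s)) (at s)"
      using bounded_bilinear.has_vector_derivative[OF bbil a dB] .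
    moreover have "adj (A s) ** (mat (- \<i>) ** (H s ** B s)) + adj (mat (- \<i>) ** (H s ** A s)) ** B s = 0"
    proof -
      have e1: "adj (A s) ** (mat (- \<i>) ** (H s ** B s)) = (adj (A s) ** H s ** B s) ** mat (- \<i>)"
        by (metis mat_mult_c matrix_mul_assoc)
      have e2: "adj (mat (- \<i>) ** (H s ** A s)) ** B s = (adj (A s) ** H s ** B s) ** mat \<i>"
        by (simp add: adj_mult adj_mat herm matrix_mul_assoc) (metis mat_mult_c matrix_mul_assoc)
      show ?thesis unfolding e1 e2 by (rule mcancel)
    qed
    ultimately show ?thesis by simp
  qed
  obtain c where "\<And>x. x \<in> UNIV \<Longrightarrow> adj (A x) ** B x = c"
    using has_vector_derivative_zero_constant[OF convex_UNIV d] by blast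
  then show ?thesis by simp
qed

lemma l2inner_neg: "l2inner h (\<lambda>k. - f k) = - l2inner h f"
  unfolding l2inner_def by simp

lemma neg_L2: "f \<in> L2 \<Longrightarrow> (\<lambda>k. - f k) \<in> L2"
  unfolding L2_def by auto

lemma Ham_neg: "Ham \<omega>0 lam \<omega> g G s (\<lambda>k. - f k) = sigma_z ** Ham \<omega>0 lam \<omega> g G s f ** sigma_z"
  if "G $ 1 $ 1 = 0" "G $ 2 $ 2 = 0"
proof -
  have "l2inner (evol \<omega> s (\<lambda>k. - f k)) g = - l2inner (evol \<omega> s f) g"
    unfolding l2inner_def evol_def
    by (simp add: integral_minus[symmetric] del: integral_minus)
  then show ?thesis using that
    by (simp add: Ham_def meq2 mm2 sz vector_scaleR_component)
qed

lemma Ham_herm: "adj G = G \<Longrightarrow> adj (Ham \<omega>0 lam \<omega> g G s f) = Ham \<omega>0 lam \<omega> g G s f"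
  by (simp add: Ham_def adj_add adj_scaleR adj_sz)

lemma conj_diag: "is_diag X \<Longrightarrow>
   (sigma_z ** U ** sigma_z) ** X ** adj (sigma_z ** U ** sigma_z) = sigma_z ** (U ** X ** adj U) ** sigma_z"
proof -
  assume d: "is_diag X"
  have "(sigma_z ** U ** sigma_z) ** X ** adj (sigma_z ** U ** sigma_z)
      = sigma_z ** U ** (sigma_z ** X ** sigma_z) ** adj U ** sigma_z"
    by (simp add: adj_mult adj_sz matrix_mul_assoc)
  also have "\<dots> = sigma_z ** (U ** X ** adj U) ** sigma_z"
    by (simp add: sz_diag[OF d] matrix_mul_assoc)
  finally show ?thesis .
qed

lemma conj_zd: "zero_diag X \<Longrightarrow>
   (sigma_z ** U ** sigma_z) ** X ** adj (sigma_z ** U ** sigma_z) = - (sigma_z ** (U ** X ** adj U) ** sigma_z)"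
proof -
  assume d: "zero_diag X"
  have "(sigma_z ** U ** sigma_z) ** X ** adj (sigma_z ** U ** sigma_z)
      = sigma_z ** U ** (sigma_z ** X ** sigma_z) ** adj U ** sigma_z"
    by (simp add: adj_mult adj_sz matrix_mul_assoc)
  also have "\<dots> = - (sigma_z ** (U ** X ** adj U) ** sigma_z)"
    by (simp add: sz_zd[OF d] mneg_l mneg_r matrix_mul_assoc)
  finally show ?thesis .
qed

theorem mainTheorem13:
  fixes \<omega>0 lam :: real and \<omega> :: "real^3 \<Rightarrow> real" and g :: "real^3 \<Rightarrow> complex"
    and G :: "complex^2^2" and \<mu> :: "(real^3 \<Rightarrow> complex) measure"
    and U :: "real \<Rightarrow> (real^3 \<Rightarrow> complex) \<Rightarrow> complex^2^2"
  assumes "\<omega>0 > 0"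
    and "\<omega> \<in> borel_measurable lborel" and "\<forall>k. \<omega> k \<ge> 0"
    and "g \<in> L2"
    and "adj G = G" and "G $ 1 $ 1 = 0" and "G $ 2 $ 2 = 0"
    and "prob_space \<mu>" and "space \<mu> = L2" and "sets \<mu> = L2_borel_sets"
    and "\<forall>A \<in> sets \<mu>. emeasure \<mu> ((\<lambda>f. - f) -` A \<inter> space \<mu>) = emeasure \<mu> A"
    and "\<forall>f \<in> L2. U 0 f = mat 1"
    and "\<forall>f \<in> L2. \<forall>t. ((\<lambda>s. U s f) has_vector_derivative
            (mat (- \<i>) ** (Ham \<omega>0 lam \<omega> g G t f ** U t f))) (at t)"
  shows "\<forall>t X. (is_diag X \<longrightarrow> is_diag (Phi \<mu> U t X))
             \<and> (zero_diag X \<longrightarrow> zero_diag (Phi \<mu> U t X))"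
proof -
  note herm = Ham_herm[OF assms(5)]
  have Uneg: "U t (- f) = sigma_z ** U t f ** sigma_z" if f: "f \<in> L2" for t f
  proof -
    have mf: "- f = (\<lambda>k. - f k)" by auto
    have nf: "- f \<in> L2" using neg_L2[OF f] mf by simp
    let ?H = "\<lambda>s. Ham \<omega>0 lam \<omega> g G s (- f)"
    have dA: "((\<lambda>s. U s (- f)) has_vector_derivative (mat (- \<i>) ** (?H s ** U s (- f)))) (at s)" for s
      using assms(13) nf by blast
    have dB: "((\<lambda>s. sigma_z ** U s f ** sigma_z) has_vector_derivative
        (mat (- \<i>) ** (?H s ** (sigma_z ** U s f ** sigma_z)))) (at s)" for s
    proof -
      have "((\<lambda>s. sigma_z ** U s f ** sigma_z) has_vector_derivative
        sigma_z ** (mat (- \<i>) ** (Ham \<omega>0 lam \<omega> g G s f ** U s f)) ** sigma_z) (at s)"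
        using bounded_linear.has_vector_derivative[OF sz_lin, of "\<lambda>s. U s f"] assms(13) f by blast
      moreover have "sigma_z ** (mat (- \<i>) ** (Ham \<omega>0 lam \<omega> g G s f ** U s f)) ** sigma_z
         = mat (- \<i>) ** (?H s ** (sigma_z ** U s f ** sigma_z))"
        unfolding mf Ham_neg[OF assms(6,7)]
        by (simp add: matrix_mul_assoc szszr sz_matc)
      ultimately show ?thesis by simp
    qed
    have h1: "adj (U t (- f)) ** (sigma_z ** U t f ** sigma_z) = mat 1"
      using ode_const[of ?H "\<lambda>s. U s (- f)" "\<lambda>s. sigma_z ** U s f ** sigma_z", OF herm dA dB]
        assms(12) f nf by (simp add: adj_mat szsz)
    have h2: "adj (U t (- f)) ** U t (- f) = mat 1"
      using ode_const[of ?H "\<lambda>s. U s (- f)" "\<lambda>s. U s (- f)", OF herm dA dA]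
        assms(12) nf by (simp add: adj_mat)
    have h3: "U t (- f) ** adj (U t (- f)) = mat 1"
      using h2 matrix_left_right_inverse by blast
    have "sigma_z ** U t f ** sigma_z = (U t (- f) ** adj (U t (- f))) ** (sigma_z ** U t f ** sigma_z)"
      by (simp add: h3)
    also have "\<dots> = U t (- f)" by (metis matrix_mul_assoc h1 matrix_mul_rid)
    finally show ?thesis by simp
  qed
  have meas: "(\<lambda>f. - f) \<in> measurable \<mu> \<mu>"
  proof (rule measurable_sigma_sets[OF assms(10)[unfolded L2_borel_sets_def]])
    show "(\<Union>h\<in>L2. {(\<lambda>f. l2inner h f) -` B \<inter> L2 | B. B \<in> sets (borel :: complex measure)}) \<subseteq> Pow L2"
      by auto
    show "(\<lambda>f. - f) \<in> space \<mu> \<rightarrow> L2"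
      using neg_L2 assms(9) by (auto simp: fun_Compl_def)
  next
    fix y assume "y \<in> (\<Union>h\<in>L2. {(\<lambda>f. l2inner h f) -` B \<inter> L2 | B. B \<in> sets (borel :: complex measure)})"
    then obtain h B where h: "h \<in> L2" and B: "B \<in> sets (borel :: complex measure)"
      and y: "y = (\<lambda>f. l2inner h f) -` B \<inter> L2" by blast
    have nB: "uminus -` B \<in> sets (borel :: complex measure)"
      using measurable_sets[OF borel_measurable_uminus[OF measurable_ident] B] by simp
    have "(\<lambda>f. - f) -` y \<inter> space \<mu> = (\<lambda>f. l2inner h f) -` (uminus -` B) \<inter> L2"
    proof -
      have "l2inner h (- f) = - l2inner h f" for f
        using l2inner_neg[of h f] by (simp add: fun_Compl_def)
      moreover have "f \<in> L2 \<Longrightarrow> - f \<in> L2" for f using neg_L2[of f] by (simp add: fun_Compl_def)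
      ultimately show ?thesis using y assms(9) by auto
    qed
    also have "\<dots> \<in> sets \<mu>"
      unfolding assms(10) L2_borel_sets_def using h nB by (intro sigma_sets.Basic) blast
    finally show "(\<lambda>f. - f) -` y \<inter> space \<mu> \<in> sets \<mu>" .
  qed
  have distr_eq: "distr \<mu> \<mu> (\<lambda>f. - f) = \<mu>"
    by (rule measure_eqI) (simp_all add: emeasure_distr[OF meas] assms(11))
  show ?thesis
  proof (intro allI)
    fix t X
    define F where "F f = U t f ** X ** adj (U t f)" for f
    have Phi_eq: "Phi \<mu> U t X = integral\<^sup>L \<mu> F" unfolding Phi_def F_def by simp
    have key: "Phi \<mu> U t X $ i $ j = 0"
      if sgn: "\<And>f. f \<in> L2 \<Longrightarrow> F (- f) $ i $ j = - (F f $ i $ j)" for i j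
    proof (cases "integrable \<mu> F")
      case False
      then show ?thesis unfolding Phi_eq by (simp add: not_integrable_integral_eq)
    next
      case True
      let ?h = "\<lambda>f. F f $ i $ j"
      have hint: "integrable \<mu> ?h" using integrable_bounded_linear[OF ent_lin True] .
      have hm: "?h \<in> borel_measurable \<mu>" using hint by auto
      have I: "Phi \<mu> U t X $ i $ j = integral\<^sup>L \<mu> ?h"
        unfolding Phi_eq using integral_bounded_linear[OF ent_lin True] by simp
      have "integral\<^sup>L \<mu> ?h = integral\<^sup>L (distr \<mu> \<mu> (\<lambda>f. - f)) ?h" by (simp add: distr_eq)
      also have "\<dots> = integral\<^sup>L \<mu> (\<lambda>f. ?h (- f))" by (rule integral_distr[OF meas hm])
      also have "\<dots> = integral\<^sup>L \<mu> (\<lambda>f. - ?h f)"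
        by (rule Bochner_Integration.integral_cong) (auto simp: sgn assms(9))
      also have "\<dots> = - integral\<^sup>L \<mu> ?h" by simp
      finally show ?thesis using I by simp
    qed
    show "(is_diag X \<longrightarrow> is_diag (Phi \<mu> U t X)) \<and> (zero_diag X \<longrightarrow> zero_diag (Phi \<mu> U t X))"
    proof safe
      assume d: "is_diag X"
      have s: "F (- f) = sigma_z ** F f ** sigma_z" if "f \<in> L2" for f
        unfolding F_def Uneg[OF that] by (rule conj_diag[OF d])
      show "is_diag (Phi \<mu> U t X)" unfolding is_diag_def
        by (intro conjI key) (simp_all add: s sz_ent)
    next
      assume d: "zero_diag X"
      have s: "F (- f) = - (sigma_z ** F f ** sigma_z)" if "f \<in> L2" for f
        unfolding F_def Uneg[OF that] by (rule conj_zd[OF d])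
      show "zero_diag (Phi \<mu> U t X)" unfolding zero_diag_def
        by (intro conjI key) (simp_all add: s sz_ent)
    qed
  qed
qed

end
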